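(* Let $q=4$ and $n\geq 2$, and let $c>0$ be a real number such that $k=\frac{3n}{8}(\log(3n)+c)$ is an integer. Then $$\Vert \nu_n^{*k}-\pi_n\Vert_{TV}^2\leq \frac94\left(e^{e^{-c}}-1\right).$$
   Context: For integers $n\geq1$, $q\geq2$, the Hamming scheme $H(n,q)$ is the graph with vertex set $X_n=\{0,1,\dots,q-1\}^n$ in which $x$ and $x'$ are adjacent ($x\sim x'$) iff they differ in exactly one coordinate. The simple random walk has transition probability $p_n(x,x')=\frac{1}{n(q-1)}$ if $x\sim x'$ and $0$ otherwise. Let $p_n^{(k)}$ denote the $k$-step transition probability ($p_n^{(0)}(x,x')=\delta_{x,x'}$), $x^{(0)}=(0,\dots,0)$, and $\nu_n^{*k}(x)=p_n^{(k)}(x^{(0)},x)$. $\pi_n$ is the uniform probability measure on $X_n$. For measures $\mu,\nu$ on $X_n$, $\Vert\mu-\nu\Vert_{TV}=\max_{S\subset X_n}|\mu(S)-\nu(S)|$. *)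

theory Defs
  imports Complex_Main "HOL-Library.FuncSet"
begin

definition ham_X :: "nat \<Rightarrow> nat \<Rightarrow> (nat \<Rightarrow> nat) set" where
  "ham_X n q = PiE {..<n} (\<lambda>_. {..<q})"

definition ham_adj :: "nat \<Rightarrow> (nat \<Rightarrow> nat) \<Rightarrow> (nat \<Rightarrow> nat) \<Rightarrow> bool" where
  "ham_adj n x y \<longleftrightarrow> card {i \<in> {..<n}. x i \<noteq> y i} = 1"

definition ham_p :: "nat \<Rightarrow> nat \<Rightarrow> (nat \<Rightarrow> nat) \<Rightarrow> (nat \<Rightarrow> nat) \<Rightarrow> real" where
  "ham_p n q x y = (if ham_adj n x y then 1 / (real n * (real q - 1)) else 0)"

fun ham_pk :: "nat \<Rightarrow> nat \<Rightarrow> nat \<Rightarrow> (nat \<Rightarrow> nat) \<Rightarrow> (nat \<Rightarrow> nat) \<Rightarrow> real" where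
  "ham_pk n q 0 x y = (if x = y then 1 else 0)"
| "ham_pk n q (Suc k) x y = (\<Sum>z\<in>ham_X n q. ham_pk n q k x z * ham_p n q z y)"

definition ham_x0 :: "nat \<Rightarrow> nat \<Rightarrow> nat" where
  "ham_x0 n = restrict (\<lambda>_. 0) {..<n}"

definition ham_nu :: "nat \<Rightarrow> nat \<Rightarrow> nat \<Rightarrow> (nat \<Rightarrow> nat) \<Rightarrow> real" where
  "ham_nu n q k x = ham_pk n q k (ham_x0 n) x"

definition ham_pi :: "nat \<Rightarrow> nat \<Rightarrow> (nat \<Rightarrow> nat) \<Rightarrow> real" where
  "ham_pi n q x = 1 / real (card (ham_X n q))"

definition tv_dist :: "'a set \<Rightarrow> ('a \<Rightarrow> real) \<Rightarrow> ('a \<Rightarrow> real) \<Rightarrow> real" where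
  "tv_dist X \<mu> \<nu> = Max {\<bar>(\<Sum>x\<in>S. \<mu> x) - (\<Sum>x\<in>S. \<nu> x)\<bar> | S. S \<subseteq> X}"

end

theory Submission
  imports Defs
begin


lemma perS:
  fixes n j k :: nat and u :: real
  assumes n: "n > 0" and j: "j \<le> n" and u: "u \<ge> 0"
    and r: "exp (- 8 * real k / (3 * real n)) = u / (3 * real n)"
  shows "3 ^ j * (1 - 4 * real j / (3 * real n)) ^ (2 * k) \<le> (u / real n) ^ j + 3 ^ j / 9 ^ k"
proof (cases "4 * j \<le> 3 * n")
  case True
  define x where "x = 4 * real j / (3 * real n)"
  have x0: "0 \<le> 1 - x" using True n by (simp add: x_def field_simps)
  have "1 - x \<le> exp (-x)" using exp_ge_add_one_self[of "-x"] by simp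
  hence "(1 - x) ^ (2*k) \<le> exp (-x) ^ (2*k)" using x0 by (intro power_mono) auto
  also have "\<dots> = exp (real (2*k) * (-x))" by (subst exp_of_nat_mult) simp
  also have "real (2*k) * (-x) = real j * (- 8 * real k / (3 * real n))"
    using n by (simp add: x_def field_simps)
  also have "exp \<dots> = (u / (3 * real n)) ^ j" by (subst exp_of_nat_mult) (simp only: r)
  finally have "3 ^ j * (1 - x) ^ (2*k) \<le> 3 ^ j * (u / (3 * real n)) ^ j" by simp
  also have "\<dots> = (u / real n) ^ j" by (simp add: power_mult_distrib[symmetric])
  finally show ?thesis unfolding x_def by (simp add: add_increasing2)
next
  case False
  define x where "x = 4 * real j / (3 * real n)"
  have "(1 - x)^2 \<le> 1/9"
  proof -
    have "x \<ge> 1" using False n by (simp add: x_def field_simps)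
    moreover have "x \<le> 4/3" using j n by (simp add: x_def field_simps)
    ultimately have "(x-1)*(x-1) \<le> (1/3)*(1/3)" by (intro mult_mono) auto
    moreover have "(1-x)^2 = (x-1)*(x-1)" by (simp add: power2_eq_square algebra_simps)
    ultimately show ?thesis by simp
  qed
  hence "((1 - x)^2)^k \<le> (1/9)^k" by (intro power_mono) auto
  hence "(1 - x)^(2*k) \<le> 1 / 9^k" by (simp add: power_mult power_one_over)
  hence "3 ^ j * (1 - x) ^ (2*k) \<le> 3^j / 9^k" by (simp add: divide_simps)
  moreover have "(u / real n) ^ j \<ge> 0" using u by simp
  ultimately show ?thesis unfolding x_def by linarith
qed

lemma sum_pow_card:
  fixes a :: real
  assumes "finite A"
  shows "(\<Sum>S\<in>Pow A. a ^ card S) = (1 + a) ^ card A"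
proof -
  have "(\<Prod>x\<in>A. a + 1) = (\<Sum>X\<in>Pow A. (\<Prod>x\<in>X. a) * (\<Prod>x\<in>A-X. 1))"
    by (rule prod_add[OF assms])
  thus ?thesis by (simp add: add.commute)
qed

lemma exp_three_halves: "4 \<le> exp (3/2::real)"
proof -
  have "(1 + (3/2) / real (10::nat)) ^ 10 \<le> exp (3/2::real)"
    by (rule exp_ge_one_plus_x_over_n_power_n) auto
  moreover have "(4::real) \<le> (1 + (3/2) / real (10::nat)) ^ 10" by (simp add: power_def)
  ultimately show ?thesis by linarith
qed

lemma four_pow_bound:
  fixes n k :: nat and c :: real
  assumes n: "n \<ge> 2" and c: "c > 0"
    and k: "real k = 3 * real n / 8 * (ln (3 * real n) + c)"
  shows "4 ^ n / 9 ^ k \<le> 8 * exp (- c)"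
proof -
  define L where "L = ln (9::real)"
  have e2: "exp (2::real) \<le> 9"
  proof -
    have "exp (2::real) = exp 1 ^ 2" by (subst exp_of_nat_mult[symmetric]) simp
    also have "\<dots> \<le> 3 ^ 2" by (intro power_mono exp_le) auto
    finally show ?thesis by simp
  qed
  hence L2: "L \<ge> 2" unfolding L_def by (subst ln_ge_iff) auto
  have nine: "(9::real) ^ k = exp (real k * L)" unfolding L_def
    by (subst exp_of_nat_mult) simp
  define E where "E = 3 * real n / 8 * ln (3 * real n) * L"
  have "3 * real n / 8 * L \<ge> 1" using n L2
  proof -
    have "3 * real n / 8 \<ge> 3/4" using n by simp
    hence "3/4 * 2 \<le> 3 * real n / 8 * L" using L2 by (intro mult_mono) auto
    thus ?thesis by linarith
  qed
  hence "c * (3 * real n / 8 * L) \<ge> c" using c by simp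
  hence kE: "real k * L - c \<ge> E" unfolding E_def k by (simp add: algebra_simps)
  have E4: "4 ^ n \<le> 8 * exp E"
  proof (cases "n \<ge> 3")
    case True
    have "ln (3 * real n) \<ge> 2" using True e2 by (subst ln_ge_iff) auto
    hence "ln (3 * real n) * L \<ge> 2 * 2" using L2 by (intro mult_mono) auto
    hence "3 * real n / 8 * (ln (3 * real n) * L) \<ge> 3 * real n / 8 * (2*2)"
      by (intro mult_left_mono) auto
    hence "E \<ge> 3 * real n / 8 * 4" unfolding E_def by (simp add: mult.assoc)
    hence "E \<ge> real n * (3/2)" by simp
    hence a: "exp (real n * (3/2)) \<le> exp E" by (simp only: exp_le_cancel_iff)
    have b: "exp (real n * (3/2)) = exp (3/2) ^ n" by (rule exp_of_nat_mult)
    have "(4::real) ^ n \<le> exp (3/2) ^ n" using exp_three_halves by (intro power_mono) auto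
    with a b have "4 ^ n \<le> exp E" by linarith
    moreover have "exp E \<ge> 0" by simp
    ultimately show ?thesis by linarith
  next
    case False
    hence nn: "n = 2" using n by simp
    have "exp (1::real) \<le> 6" using exp_le by simp
    hence "ln (6::real) \<ge> 1" by (subst ln_ge_iff) auto
    hence "ln (6::real) * L \<ge> 1 * 2" using L2 by (intro mult_mono) auto
    hence "E \<ge> 3/2" unfolding E_def nn by (simp add: mult.commute)
    hence "exp E \<ge> 1 + 3/2" using exp_ge_add_one_self[of E] by linarith
    thus ?thesis using nn by simp
  qed
  have "4 ^ n \<le> 8 * exp (real k * L - c)" using E4 kE by (smt (verit) exp_le_cancel_iff)
  also have "exp (real k * L - c) = 9 ^ k * exp (- c)" by (simp add: nine exp_diff exp_minus field_simps)
  finally show ?thesis by (simp add: divide_simps mult.commute mult.left_commute)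
qed



definition hh :: "nat \<Rightarrow> real" where "hh v = (if v = 0 then 3 else -1)"
definition phi :: "nat set \<Rightarrow> (nat \<Rightarrow> nat) \<Rightarrow> real" where "phi S x = (\<Prod>i\<in>S. hh (x i))"
definition mu :: "nat \<Rightarrow> nat set \<Rightarrow> real" where "mu n S = 1 - 4 * real (card S) / (3 * real n)"
definition gg :: "nat \<Rightarrow> nat \<Rightarrow> (nat \<Rightarrow> nat) \<Rightarrow> real" where
  "gg n m x = (\<Sum>S\<in>Pow {..<n}. mu n S ^ m * phi S x) / 4 ^ n"

lemma four_eq: "{..<4::nat} = {0,1,2,3}" by auto

lemma sum_hh: "(\<Sum>v<4. hh v) = 0"
  by (simp add: four_eq hh_def)

lemma neighbors:
  assumes y: "y \<in> ham_X n 4"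
  shows "{z \<in> ham_X n 4. ham_adj n z y} = (\<lambda>(i,v). y(i:=v)) ` (SIGMA i:{..<n}. {..<4} - {y i})"
proof (intro equalityI subsetI)
  fix z assume z: "z \<in> {z \<in> ham_X n 4. ham_adj n z y}"
  hence zX: "z \<in> ham_X n 4" and "card {i \<in> {..<n}. z i \<noteq> y i} = 1" by (auto simp: ham_adj_def)
  then obtain i where i: "{i \<in> {..<n}. z i \<noteq> y i} = {i}" by (auto simp: card_1_singleton_iff)
  hence iin: "i < n" "z i \<noteq> y i" by auto
  have "z = y(i := z i)"
  proof
    fix j show "z j = (y(i := z i)) j"
    proof (cases "j = i")
      case False
      show ?thesis
      proof (cases "j < n")
        case True thus ?thesis using i False by auto
      next
        case False thus ?thesis using zX y \<open>j \<noteq> i\<close> by (auto simp: ham_X_def PiE_def extensional_def)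
      qed
    qed simp
  qed
  moreover have "z i < 4" using zX iin by (auto simp: ham_X_def PiE_iff)
  ultimately show "z \<in> (\<lambda>(i,v). y(i:=v)) ` (SIGMA i:{..<n}. {..<4} - {y i})"
    using iin by (intro image_eqI[where x="(i, z i)"]) auto
next
  fix z assume "z \<in> (\<lambda>(i,v). y(i:=v)) ` (SIGMA i:{..<n}. {..<4} - {y i})"
  then obtain i v where iv: "i < n" "v < 4" "v \<noteq> y i" and z: "z = y(i:=v)" by auto
  have "z \<in> ham_X n 4" using y iv z unfolding ham_X_def
    by (metis PiE_fun_upd insert_absorb lessThan_iff)
  moreover have "{j \<in> {..<n}. z j \<noteq> y j} = {i}" using iv z by auto
  ultimately show "z \<in> {z \<in> ham_X n 4. ham_adj n z y}" by (simp add: ham_adj_def)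
qed

lemma neighbors_inj:
  "inj_on (\<lambda>(i,v). y(i:=v)) (SIGMA i:{..<n}. {..<4::nat} - {y i})"
proof (rule inj_onI)
  fix a b assume a: "a \<in> (SIGMA i:{..<n}. {..<4::nat} - {y i})" and b: "b \<in> (SIGMA i:{..<n}. {..<4::nat} - {y i})"
    and eq: "(\<lambda>(i,v). y(i:=v)) a = (\<lambda>(i,v). y(i:=v)) b"
  obtain i v where av: "a = (i,v)" by (cases a)
  obtain i' v' where bv: "b = (i',v')" by (cases b)
  have h: "y(i := v) = y(i' := v')" "v \<noteq> y i" "v' \<noteq> y i'" using a b eq av bv by auto
  have "i = i' \<and> v = v'"
  proof (cases "i = i'")
    case True thus ?thesis using h(1) by (metis fun_upd_same)
  next
    case False
    have "(y(i := v)) i = (y(i' := v')) i" using h(1) by simp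
    thus ?thesis using False h(2) by simp
  qed
  thus "a = b" using av bv by simp
qed

lemma phi_upd:
  "phi S (y(i:=v)) = (if i \<in> S then hh v * phi (S - {i}) y else phi S y)" if "finite S"
proof (cases "i \<in> S")
  case True
  have "phi S (y(i:=v)) = hh v * (\<Prod>j\<in>S-{i}. hh ((y(i:=v)) j))"
    unfolding phi_def using True that by (subst prod.remove[of S i]) auto
  also have "(\<Prod>j\<in>S-{i}. hh ((y(i:=v)) j)) = phi (S - {i}) y"
    unfolding phi_def by (intro prod.cong) auto
  finally show ?thesis using True by (simp only: if_True)
next
  case False
  thus ?thesis unfolding phi_def by (auto intro!: prod.cong)
qed

lemma finite_X: "finite (ham_X n q)" unfolding ham_X_def by (intro finite_PiE) auto

lemma inner_sum:
  assumes S: "finite S" and yi: "y i < 4"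
  shows "(\<Sum>v\<in>{..<4} - {y i}. phi S (y(i:=v))) = (if i \<in> S then - phi S y else 3 * phi S y)"
proof -
  have "(\<Sum>v\<in>{..<4} - {y i}. phi S (y(i:=v))) = (\<Sum>v<4. phi S (y(i:=v))) - phi S (y(i := y i))"
    using yi by (subst sum_diff1) auto
  also have "phi S (y(i := y i)) = phi S y" by simp
  also have "(\<Sum>v<4. phi S (y(i:=v))) = (if i \<in> S then 0 else 4 * phi S y)"
  proof (cases "i \<in> S")
    case True
    have "(\<Sum>v<4. phi S (y(i:=v))) = (\<Sum>v<4. hh v) * phi (S - {i}) y"
      using True S by (simp add: phi_upd sum_distrib_right)
    thus ?thesis using True sum_hh by simp
  next
    case False thus ?thesis using S by (simp add: phi_upd)
  qed
  finally have eq: "(\<Sum>v\<in>{..<4} - {y i}. phi S (y(i:=v))) = (if i \<in> S then 0 else 4 * phi S y) - phi S y" .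
  thus ?thesis by auto
qed

lemma eigen:
  assumes n: "n > 0" and y: "y \<in> ham_X n 4" and S: "S \<subseteq> {..<n}"
  shows "(\<Sum>z\<in>ham_X n 4. phi S z * ham_p n 4 z y) = mu n S * phi S y"
proof -
  have fS: "finite S" using S finite_subset by blast
  let ?N = "{z \<in> ham_X n 4. ham_adj n z y}"
  let ?A = "SIGMA i:{..<n}. {..<4::nat} - {y i}"
  have "(\<Sum>z\<in>ham_X n 4. phi S z * ham_p n 4 z y) = (\<Sum>z\<in>?N. phi S z / (3 * real n))"
    unfolding ham_p_def by (simp add: sum.inter_filter[symmetric] finite_X if_distrib mult.commute cong: if_cong)
  also have "\<dots> = (\<Sum>z\<in>?N. phi S z) / (3 * real n)" by (simp add: sum_divide_distrib)
  also have "(\<Sum>z\<in>?N. phi S z) = (\<Sum>p\<in>?A. phi S ((\<lambda>(i,v). y(i:=v)) p))"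
    unfolding neighbors[OF y] by (rule sum.reindex[OF neighbors_inj, unfolded comp_def])
  also have "\<dots> = (\<Sum>i<n. \<Sum>v\<in>{..<4} - {y i}. phi S (y(i:=v)))"
    by (subst sum.Sigma) (auto simp: split_beta)
  also have "\<dots> = (\<Sum>i<n. (if i \<in> S then - phi S y else 3 * phi S y))"
  proof (intro sum.cong refl inner_sum[OF fS])
    fix i assume "i \<in> {..<n}" thus "y i < 4" using y by (auto simp: ham_X_def PiE_iff)
  qed
  also have "\<dots> = (\<Sum>i\<in>{..<n} \<inter> S. - phi S y) + (\<Sum>i\<in>{..<n} - S. 3 * phi S y)"
    by (subst sum.If_cases) (simp_all add: Collect_mem_eq Diff_eq)
  also have "\<dots> = real (card S) * (- phi S y) + real (n - card S) * (3 * phi S y)"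
  proof -
    have "{..<n} \<inter> S = S" using S by auto
    moreover have "card ({..<n} - S) = n - card S" using S by (simp add: card_Diff_subset fS)
    ultimately show ?thesis by simp
  qed
  also have "\<dots> = (3 * real n - 4 * real (card S)) * phi S y"
  proof -
    have "card S \<le> n" using S by (metis card_lessThan card_mono finite_lessThan)
    thus ?thesis by (simp add: of_nat_diff algebra_simps)
  qed
  finally show ?thesis using n unfolding mu_def by (simp add: field_simps)
qed

lemma x0_X: "ham_x0 n \<in> ham_X n 4" unfolding ham_x0_def ham_X_def by auto

lemma gg0:
  assumes x: "x \<in> ham_X n 4"
  shows "gg n 0 x = (if ham_x0 n = x then 1 else 0)"
proof -
  have "(\<Sum>S\<in>Pow {..<n}. phi S x) = (\<Prod>i<n. hh (x i) + 1)"
    unfolding phi_def by (subst prod_add) auto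
  also have "\<dots> = (\<Prod>i<n. if x i = 0 then 4 else 0)"
    by (intro prod.cong) (auto simp: hh_def)
  also have "\<dots> = (if ham_x0 n = x then 4 ^ n else 0)"
  proof (cases "ham_x0 n = x")
    case True
    hence "\<forall>i<n. x i = 0" unfolding ham_x0_def by auto
    thus ?thesis using True by simp
  next
    case False
    have "\<exists>i<n. x i \<noteq> 0"
    proof (rule ccontr)
      assume "\<not> ?thesis"
      hence "ham_x0 n = x" using x unfolding ham_x0_def ham_X_def
        by (auto simp: fun_eq_iff PiE_def extensional_def)
      thus False using False by simp
    qed
    then obtain i where "i < n" "x i \<noteq> 0" by blast
    thus ?thesis using False by (intro trans[OF prod_zero]) auto
  qed
  finally show ?thesis unfolding gg_def by simp
qed

lemma pk_eq:
  assumes n: "n > 0"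
  shows "x \<in> ham_X n 4 \<Longrightarrow> ham_pk n 4 m (ham_x0 n) x = gg n m x"
proof (induction m arbitrary: x)
  case 0 thus ?case using gg0 by simp
next
  case (Suc m)
  have "ham_pk n 4 (Suc m) (ham_x0 n) x = (\<Sum>z\<in>ham_X n 4. gg n m z * ham_p n 4 z x)"
    using Suc.IH by simp
  also have "\<dots> = (\<Sum>z\<in>ham_X n 4. \<Sum>S\<in>Pow {..<n}. mu n S ^ m * (phi S z * ham_p n 4 z x)) / 4 ^ n"
    unfolding gg_def by (simp add: sum_divide_distrib sum_distrib_right mult.assoc)
  also have "\<dots> = (\<Sum>S\<in>Pow {..<n}. mu n S ^ m * (\<Sum>z\<in>ham_X n 4. phi S z * ham_p n 4 z x)) / 4 ^ n"
    by (subst sum.swap) (simp add: sum_distrib_left)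
  also have "\<dots> = (\<Sum>S\<in>Pow {..<n}. mu n S ^ Suc m * phi S x) / 4 ^ n"
    using eigen[OF n Suc.prems] by (intro arg_cong[where f="\<lambda>t. t / 4 ^ n"] sum.cong) auto
  finally show ?case unfolding gg_def .
qed

lemma phi_ext:
  assumes "S \<subseteq> {..<n}"
  shows "phi S x = (\<Prod>i<n. if i \<in> S then hh (x i) else 1)"
proof -
  have "(\<Prod>i<n. if i \<in> S then hh (x i) else 1) = (\<Prod>i\<in>{..<n} \<inter> S. hh (x i))"
    by (subst prod.If_cases) (simp_all add: Collect_mem_eq)
  also have "{..<n} \<inter> S = S" using assms by auto
  finally show ?thesis unfolding phi_def by simp
qed

lemma orth:
  assumes S: "S \<subseteq> {..<n}" and T: "T \<subseteq> {..<n}"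
  shows "(\<Sum>x\<in>ham_X n 4. phi S x * phi T x) = (if S = T then 4 ^ n * 3 ^ card S else 0)"
proof -
  define e where "e i v = (if i \<in> S then hh v else 1) * (if i \<in> T then hh v else 1)" for i v
  have "(\<Sum>x\<in>ham_X n 4. phi S x * phi T x) = (\<Sum>x\<in>ham_X n 4. \<Prod>i<n. e i (x i))"
    unfolding phi_ext[OF S] phi_ext[OF T] e_def by (simp add: prod.distrib)
  also have "\<dots> = (\<Prod>i<n. \<Sum>v<4. e i v)"
    unfolding ham_X_def by (subst prod_sum_PiE) auto
  also have "\<dots> = (\<Prod>i<n. if i \<in> S \<and> i \<in> T then 12 else if i \<in> S \<or> i \<in> T then 0 else 4)"
    by (intro prod.cong) (auto simp: e_def four_eq hh_def)
  also have "\<dots> = (if S = T then 4 ^ n * 3 ^ card S else 0)"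
  proof (cases "S = T")
    case False
    then obtain i where "i \<in> S \<and> i \<notin> T \<or> i \<in> T \<and> i \<notin> S" by blast
    moreover hence "i < n" using S T by auto
    ultimately show ?thesis using False by (intro trans[OF prod_zero]) auto
  next
    case True
    have fS: "finite S" using S finite_subset by blast
    have "(\<Prod>i<n. if i \<in> S \<and> i \<in> T then 12 else if i \<in> S \<or> i \<in> T then 0 else 4)
        = (\<Prod>i<n. if i \<in> S then 12 else (4::real))" using True by (intro prod.cong) auto
    also have "\<dots> = 12 ^ card S * 4 ^ (n - card S)"
    proof -
      have "{..<n} \<inter> S = S" using S by auto
      moreover have "card ({..<n} - S) = n - card S" using S by (simp add: card_Diff_subset fS)
      ultimately show ?thesis by (subst prod.If_cases) (simp_all add: Collect_mem_eq Diff_eq)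
    qed
    also have "\<dots> = 4 ^ n * 3 ^ card S"
    proof -
      have "card S \<le> n" using S by (metis card_lessThan card_mono finite_lessThan)
      hence "(4::real) ^ n = 4 ^ card S * 4 ^ (n - card S)" by (simp add: power_add[symmetric])
      moreover have "(12::real) ^ card S = 4 ^ card S * 3 ^ card S" by (simp add: power_mult_distrib[symmetric])
      ultimately show ?thesis by simp
    qed
    finally show ?thesis using True by simp
  qed
  finally show ?thesis .
qed

lemma d_eq:
  "gg n k x - 1 / 4 ^ n = (\<Sum>S\<in>Pow {..<n} - {{}}. mu n S ^ k * phi S x) / 4 ^ n"
proof -
  have "(\<Sum>S\<in>Pow {..<n}. mu n S ^ k * phi S x) = mu n {} ^ k * phi {} x + (\<Sum>S\<in>Pow {..<n} - {{}}. mu n S ^ k * phi S x)"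
    by (subst sum.remove[of _ "{}"]) auto
  also have "mu n {} ^ k * phi {} x = 1" by (simp add: mu_def phi_def)
  finally show ?thesis unfolding gg_def by (simp add: field_simps)
qed

lemma sum_d: "(\<Sum>x\<in>ham_X n 4. gg n k x - 1 / 4 ^ n) = 0"
proof -
  have "(\<Sum>x\<in>ham_X n 4. gg n k x - 1 / 4 ^ n)
      = (\<Sum>S\<in>Pow {..<n} - {{}}. mu n S ^ k * (\<Sum>x\<in>ham_X n 4. phi S x * phi {} x)) / 4 ^ n"
    unfolding d_eq by (simp add: sum_divide_distrib[symmetric] sum_distrib_left phi_def) (rule sum.swap)
  also have "\<dots> = 0" by (subst sum.neutral) (auto simp: orth)
  finally show ?thesis .
qed

lemma sumsq_d: "(\<Sum>x\<in>ham_X n 4. (gg n k x - 1 / 4 ^ n)^2)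
   = (\<Sum>S\<in>Pow {..<n} - {{}}. 3 ^ card S * mu n S ^ (2*k)) / 4 ^ n"
proof -
  let ?P = "Pow {..<n} - {{}}"
  have "(\<Sum>x\<in>ham_X n 4. (gg n k x - 1 / 4 ^ n)^2)
     = (\<Sum>x\<in>ham_X n 4. \<Sum>S\<in>?P. \<Sum>T\<in>?P. mu n S ^ k * mu n T ^ k * (phi S x * phi T x)) / (4^n * 4^n)"
    unfolding d_eq by (simp add: power2_eq_square sum_product sum_divide_distrib mult_ac)
  also have "\<dots> = (\<Sum>S\<in>?P. \<Sum>T\<in>?P. mu n S ^ k * mu n T ^ k * (\<Sum>x\<in>ham_X n 4. phi S x * phi T x)) / (4^n * 4^n)"
    by (simp add: sum_distrib_left sum.swap[of _ "ham_X n 4"])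
  also have "\<dots> = (\<Sum>S\<in>?P. mu n S ^ k * mu n S ^ k * (4 ^ n * 3 ^ card S)) / (4^n * 4^n)"
    by (intro arg_cong[where f="\<lambda>t. t / (4^n*4^n)"] sum.cong refl)
       (auto simp: orth if_distrib[where f="\<lambda>t. _ * t"] sum.delta cong: if_cong)
  also have "\<dots> = (\<Sum>S\<in>?P. 3 ^ card S * mu n S ^ (2*k)) / 4 ^ n"
    unfolding sum_divide_distrib
  proof (intro sum.cong refl)
    fix S
    have "mu n S ^ (2*k) = mu n S ^ k * mu n S ^ k" by (simp add: mult_2 power_add)
    thus "mu n S ^ k * mu n S ^ k * (4 ^ n * 3 ^ card S) / (4 ^ n * 4 ^ n) = 3 ^ card S * mu n S ^ (2 * k) / 4 ^ n"
      by (simp add: field_simps)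
  qed
  finally show ?thesis .
qed


lemma CS_abs:
  fixes f :: "'a \<Rightarrow> real"
  assumes X: "finite X"
  shows "(\<Sum>x\<in>X. \<bar>f x\<bar>)^2 \<le> real (card X) * (\<Sum>x\<in>X. (f x)^2)"
proof (cases "X = {}")
  case True thus ?thesis by simp
next
  case False
  define N where "N = real (card X)"
  define L where "L = (\<Sum>x\<in>X. \<bar>f x\<bar>)"
  define m where "m = L / N"
  have N: "N > 0" using False X by (simp add: N_def card_gt_0_iff)
  have "0 \<le> (\<Sum>x\<in>X. (\<bar>f x\<bar> - m)^2)" by (intro sum_nonneg) auto
  also have "\<dots> = (\<Sum>x\<in>X. (f x)^2) - 2 * m * L + N * m^2"
    by (simp add: power2_eq_square algebra_simps sum.distrib sum_subtractf sum_distrib_left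
        L_def N_def flip: sum_distrib_right)
  also have "\<dots> = (\<Sum>x\<in>X. (f x)^2) - L^2 / N"
    using N by (simp add: m_def power2_eq_square field_simps)
  finally have "L^2 / N \<le> (\<Sum>x\<in>X. (f x)^2)" by simp
  thus ?thesis using N by (simp add: L_def N_def field_simps)
qed

lemma tv_le:
  fixes \<mu> \<nu> :: "'a \<Rightarrow> real"
  assumes X: "finite X" and s: "(\<Sum>x\<in>X. \<mu> x - \<nu> x) = 0"
  shows "tv_dist X \<mu> \<nu> \<le> (\<Sum>x\<in>X. \<bar>\<mu> x - \<nu> x\<bar>) / 2" and "tv_dist X \<mu> \<nu> \<ge> 0"
proof -
  let ?f = "\<lambda>S. \<bar>(\<Sum>x\<in>S. \<mu> x) - (\<Sum>x\<in>S. \<nu> x)\<bar>"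
  have eq: "{?f S | S. S \<subseteq> X} = ?f ` Pow X" by auto
  have fin: "finite (?f ` Pow X)" using X by simp
  have ne: "?f ` Pow X \<noteq> {}" by auto
  have "?f S \<le> (\<Sum>x\<in>X. \<bar>\<mu> x - \<nu> x\<bar>) / 2" if S: "S \<subseteq> X" for S
  proof -
    have fS: "finite S" using S X finite_subset by blast
    have "(\<Sum>x\<in>X. \<mu> x - \<nu> x) = (\<Sum>x\<in>S. \<mu> x - \<nu> x) + (\<Sum>x\<in>X - S. \<mu> x - \<nu> x)"
      using S X by (metis sum.subset_diff add.commute)
    hence e1: "(\<Sum>x\<in>X - S. \<mu> x - \<nu> x) = - (\<Sum>x\<in>S. \<mu> x - \<nu> x)" using s by simp
    have "(\<Sum>x\<in>X. \<bar>\<mu> x - \<nu> x\<bar>) = (\<Sum>x\<in>S. \<bar>\<mu> x - \<nu> x\<bar>) + (\<Sum>x\<in>X - S. \<bar>\<mu> x - \<nu> x\<bar>)"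
      using S X by (metis sum.subset_diff add.commute)
    moreover have "\<bar>\<Sum>x\<in>S. \<mu> x - \<nu> x\<bar> \<le> (\<Sum>x\<in>S. \<bar>\<mu> x - \<nu> x\<bar>)" by (rule sum_abs)
    moreover have "\<bar>\<Sum>x\<in>X - S. \<mu> x - \<nu> x\<bar> \<le> (\<Sum>x\<in>X - S. \<bar>\<mu> x - \<nu> x\<bar>)" by (rule sum_abs)
    moreover have "\<bar>\<Sum>x\<in>X - S. \<mu> x - \<nu> x\<bar> = \<bar>\<Sum>x\<in>S. \<mu> x - \<nu> x\<bar>" using e1 by simp
    ultimately have "2 * \<bar>\<Sum>x\<in>S. \<mu> x - \<nu> x\<bar> \<le> (\<Sum>x\<in>X. \<bar>\<mu> x - \<nu> x\<bar>)"
      by linarith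
    thus ?thesis by (simp add: sum_subtractf)
  qed
  thus "tv_dist X \<mu> \<nu> \<le> (\<Sum>x\<in>X. \<bar>\<mu> x - \<nu> x\<bar>) / 2"
    unfolding tv_dist_def eq using fin ne by (subst Max_le_iff) auto
  have "?f {} \<in> ?f ` Pow X" by blast
  hence "?f {} \<le> Max (?f ` Pow X)" using fin by (intro Max_ge) auto
  thus "tv_dist X \<mu> \<nu> \<ge> 0" unfolding tv_dist_def eq by simp
qed

lemma B_bound:
  fixes n k :: nat and c :: real
  assumes n2: "n \<ge> 2" and c: "c > 0"
    and k: "real k = 3 * real n / 8 * (ln (3 * real n) + c)"
  shows "(\<Sum>S\<in>Pow {..<n} - {{}}. 3 ^ card S * mu n S ^ (2*k)) \<le> 9 * (exp (exp (- c)) - 1)"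
proof -
  define u where "u = exp (- c)"
  have n: "n > 0" using n2 by simp
  have u0: "u \<ge> 0" unfolding u_def by simp
  have r: "exp (- 8 * real k / (3 * real n)) = u / (3 * real n)"
  proof -
    have "- 8 * real k / (3 * real n) = - c - ln (3 * real n)" using n unfolding k by (simp add: field_simps)
    thus ?thesis using n by (simp add: u_def exp_diff)
  qed
  let ?P = "Pow {..<n} - {{}}"
  have "(\<Sum>S\<in>?P. 3 ^ card S * mu n S ^ (2*k)) \<le> (\<Sum>S\<in>?P. (u / real n) ^ card S + 3 ^ card S / 9 ^ k)"
  proof (intro sum_mono)
    fix S assume "S \<in> ?P"
    hence "card S \<le> n" by (metis DiffD1 PowD card_lessThan card_mono finite_lessThan)
    thus "3 ^ card S * mu n S ^ (2*k) \<le> (u / real n) ^ card S + 3 ^ card S / 9 ^ k"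
      unfolding mu_def by (rule perS[OF n _ u0 r])
  qed
  also have "\<dots> = (\<Sum>S\<in>?P. (u / real n) ^ card S) + (\<Sum>S\<in>?P. 3 ^ card S / 9 ^ k)"
    by (rule sum.distrib)
  also have "(\<Sum>S\<in>?P. (u / real n) ^ card S) = (1 + u / real n) ^ n - 1"
    using sum_pow_card[of "{..<n}" "u / real n"] by (subst sum_diff1) auto
  also have "(\<Sum>S\<in>?P. 3 ^ card S / 9 ^ k) \<le> (\<Sum>S\<in>Pow {..<n}. (3::real) ^ card S / 9 ^ k)"
    by (intro sum_mono2) auto
  also have "\<dots> = (4::real) ^ n / 9 ^ k"
    using sum_pow_card[of "{..<n}" 3] by (simp add: sum_divide_distrib[symmetric])
  also have "(1 + u / real n) ^ n \<le> exp u"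
    using n u0 by (intro exp_ge_one_plus_x_over_n_power_n) auto
  also have "4 ^ n / 9 ^ k \<le> 8 * u" unfolding u_def by (rule four_pow_bound[OF n2 c k])
  finally have A: "(\<Sum>S\<in>?P. 3 ^ card S * mu n S ^ (2*k)) \<le> exp u - 1 + 8 * u" by simp
  have "1 + u \<le> exp u" by (rule exp_ge_add_one_self)
  hence "8 + 8 * u \<le> 8 * exp u" by linarith
  hence "exp u - 1 + 8 * u \<le> 9 * (exp u - 1)" by (simp add: algebra_simps)
  with A show ?thesis unfolding u_def by linarith
qed

theorem theorem1p2:
  fixes n k :: nat and c :: real
  assumes "n \<ge> 2" and "c > 0"
    and "real k = 3 * real n / 8 * (ln (3 * real n) + c)"
  shows "(tv_dist (ham_X n 4) (ham_nu n 4 k) (ham_pi n 4))\<^sup>2 \<le> 9 / 4 * (exp (exp (- c)) - 1)"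
proof -
  have n: "n > 0" using assms(1) by simp
  let ?X = "ham_X n 4"
  have cardX: "card ?X = 4 ^ n" unfolding ham_X_def by (simp add: card_PiE)
  have pi: "ham_pi n 4 x = 1 / 4 ^ n" for x unfolding ham_pi_def cardX by simp
  have d: "ham_nu n 4 k x - ham_pi n 4 x = gg n k x - 1 / 4 ^ n" if "x \<in> ?X" for x
    using pk_eq[OF n that] unfolding ham_nu_def pi by simp
  have s0: "(\<Sum>x\<in>?X. ham_nu n 4 k x - ham_pi n 4 x) = 0"
    using sum_d[of n k] by (simp add: d cong: sum.cong)
  note tv = tv_le[OF finite_X s0]
  define L where "L = (\<Sum>x\<in>?X. \<bar>ham_nu n 4 k x - ham_pi n 4 x\<bar>)"
  have "(tv_dist ?X (ham_nu n 4 k) (ham_pi n 4))\<^sup>2 \<le> (L / 2)^2"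
    using tv unfolding L_def by (intro power_mono) auto
  also have "\<dots> = L^2 / 4" by (simp add: power2_eq_square)
  also have "L^2 \<le> real (card ?X) * (\<Sum>x\<in>?X. (ham_nu n 4 k x - ham_pi n 4 x)^2)"
    unfolding L_def by (rule CS_abs[OF finite_X])
  also have "(\<Sum>x\<in>?X. (ham_nu n 4 k x - ham_pi n 4 x)^2) = (\<Sum>x\<in>?X. (gg n k x - 1 / 4 ^ n)^2)"
    by (simp add: d cong: sum.cong)
  also have "\<dots> = (\<Sum>S\<in>Pow {..<n} - {{}}. 3 ^ card S * mu n S ^ (2*k)) / 4 ^ n" by (rule sumsq_d)
  also have "real (card ?X) * ((\<Sum>S\<in>Pow {..<n} - {{}}. 3 ^ card S * mu n S ^ (2*k)) / 4 ^ n)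
     = (\<Sum>S\<in>Pow {..<n} - {{}}. 3 ^ card S * mu n S ^ (2*k))" unfolding cardX by simp
  also have "\<dots> \<le> 9 * (exp (exp (- c)) - 1)" by (rule B_bound[OF assms])
  finally show ?thesis by simp
qed

end
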